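(* Let $B$ be a finite set, let $\sigma,\mu\in\mathrm{Sym}(B)$ and let $B'\subseteq B$. Then \[\sigma_{B'}\,\mu_{B'}=(\sigma\,\mu_{B'})_{B'}\qquad\text{and}\qquad \sigma_{|B'}\,\mu_{|B'}=(\sigma\,\mu_{B'})_{|B'}.\]
   Context: Permutations are composed as functions: $\sigma\mu=\sigma\circ\mu$. For $\mu\in\mathrm{Sym}(B)$ and $B'\subseteq B$, the restriction $\mu_{|B'}\in\mathrm{Sym}(B')$ is defined by $\mu_{|B'}(b)=\mu^k(b)$ for $b\in B'$, where $k$ is the least positive integer with $\mu^k(b)\in B'$. The cutting-out $\mu_{B'}\in\mathrm{Sym}(B)$ is the permutation equal to $\mu_{|B'}$ on $B'$ and to the identity on $B\setminus B'$. *)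

theory Defs
  imports "HOL-Combinatorics.Permutations"
begin

text \<open>Elements of Sym(B') are represented, as usual in
HOL-Combinatorics ('permutes'), by functions that are the identity outside B'.\<close>
definition perm_restrict :: "('a \<Rightarrow> 'a) \<Rightarrow> 'a set \<Rightarrow> 'a \<Rightarrow> 'a" where
  "perm_restrict \<mu> B' b =
     (if b \<in> B' then (\<mu> ^^ (LEAST k. 0 < k \<and> (\<mu> ^^ k) b \<in> B')) b else b)"

definition perm_cutout :: "('a \<Rightarrow> 'a) \<Rightarrow> 'a set \<Rightarrow> 'a \<Rightarrow> 'a" where
  "perm_cutout \<mu> B' = (\<lambda>b. if b \<in> B' then perm_restrict \<mu> B' b else b)"

end

theory Submission
  imports Defs "HOL-Combinatorics.Cycles"
begin

lemma ex_return:
  assumes "finite B" "f permutes B" "b \<in> B'"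
  shows "\<exists>k. 0 < k \<and> (f ^^ k) b \<in> B'"
proof -
  have "permutation f" using assms permutation_permutes by blast
  then obtain n where "f ^^ n = id" "n > 0" by (rule permutation_is_nilpotent)
  then show ?thesis using assms(3) by (intro exI[of _ n]) simp
qed

lemma restrict_in:
  assumes "finite B" "f permutes B" "b \<in> B'"
  shows "perm_restrict f B' b \<in> B'"
  using LeastI_ex[OF ex_return[OF assms]] assms(3) unfolding perm_restrict_def by simp

lemma cutout_eq: "perm_cutout \<mu> B' = perm_restrict \<mu> B'"
  unfolding perm_cutout_def perm_restrict_def by auto

lemma main:
  assumes fin: "finite B" and s: "\<sigma> permutes B" and m: "\<mu> permutes B" and b: "b \<in> B'"
  shows "perm_restrict \<sigma> B' (perm_restrict \<mu> B' b) = perm_restrict (\<sigma> \<circ> perm_restrict \<mu> B') B' b"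
proof -
  define \<nu> where "\<nu> = perm_restrict \<mu> B'"
  define \<tau> where "\<tau> = \<sigma> \<circ> \<nu>"
  define c where "c = \<nu> b"
  have c: "c \<in> B'" unfolding c_def \<nu>_def using restrict_in[OF fin m b] .
  define M where "M = (LEAST k. 0 < k \<and> (\<sigma> ^^ k) c \<in> B')"
  have PM: "0 < M \<and> (\<sigma> ^^ M) c \<in> B'"
    unfolding M_def by (rule LeastI_ex[OF ex_return[OF fin s c]])
  have notin: "\<And>k. 0 < k \<Longrightarrow> k < M \<Longrightarrow> (\<sigma> ^^ k) c \<notin> B'"
    using not_less_Least unfolding M_def by blast
  have nuid: "\<And>x. x \<notin> B' \<Longrightarrow> \<nu> x = x" unfolding \<nu>_def perm_restrict_def by simp
  have eq: "k \<le> M \<Longrightarrow> k > 0 \<Longrightarrow> (\<tau> ^^ k) b = (\<sigma> ^^ k) c" for k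
  proof (induction k)
    case 0 then show ?case by simp
  next
    case (Suc k)
    show ?case
    proof (cases "k = 0")
      case True then show ?thesis by (simp add: \<tau>_def c_def)
    next
      case False
      then have "(\<tau> ^^ k) b = (\<sigma> ^^ k) c" using Suc by simp
      moreover have "(\<sigma> ^^ k) c \<notin> B'" using notin False Suc.prems by simp
      ultimately show ?thesis by (simp add: nuid, simp add: \<tau>_def nuid)
    qed
  qed
  have L: "(LEAST k. 0 < k \<and> (\<tau> ^^ k) b \<in> B') = M"
  proof (rule Least_equality)
    show "0 < M \<and> (\<tau> ^^ M) b \<in> B'" using PM eq[of M] by simp
  next
    fix y assume y: "0 < y \<and> (\<tau> ^^ y) b \<in> B'"
    show "M \<le> y"
    proof (rule ccontr)
      assume "\<not> M \<le> y"
      then show False using y eq[of y] notin[of y] by simp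
    qed
  qed
  have "perm_restrict \<sigma> B' c = (\<sigma> ^^ M) c" using c unfolding perm_restrict_def M_def by simp
  also have "\<dots> = (\<tau> ^^ M) b" using eq[of M] PM by simp
  also have "\<dots> = perm_restrict \<tau> B' b" using b L unfolding perm_restrict_def by simp
  finally show ?thesis unfolding c_def \<tau>_def \<nu>_def .
qed

theorem lemma1:
  fixes B B' :: "'a set" and \<sigma> \<mu> :: "'a \<Rightarrow> 'a"
  assumes "finite B" and "\<sigma> permutes B" and "\<mu> permutes B" and "B' \<subseteq> B"
  shows "perm_cutout \<sigma> B' \<circ> perm_cutout \<mu> B' = perm_cutout (\<sigma> \<circ> perm_cutout \<mu> B') B'
    \<and> perm_restrict \<sigma> B' \<circ> perm_restrict \<mu> B' = perm_restrict (\<sigma> \<circ> perm_cutout \<mu> B') B'"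
proof -
  have "perm_restrict \<sigma> B' \<circ> perm_restrict \<mu> B' = perm_restrict (\<sigma> \<circ> perm_restrict \<mu> B') B'"
  proof
    fix b show "(perm_restrict \<sigma> B' \<circ> perm_restrict \<mu> B') b = perm_restrict (\<sigma> \<circ> perm_restrict \<mu> B') B' b"
    proof (cases "b \<in> B'")
      case True then show ?thesis using main[OF assms(1-3) True] by simp
    next
      case False then show ?thesis by (simp add: perm_restrict_def)
    qed
  qed
  then show ?thesis by (simp add: cutout_eq)
qed

end
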